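(* Agrachev–Gamkrelidze monomial bases of the free pre-Lie algebra with one generator $(\mathcal{T},\to)$ are tree-grounded. Precisely: define sets of monomials $\mathcal{M}_n$ recursively by $\mathcal{M}_1=\{\bullet\}$ and, given $\mathcal{M}_1,\dots,\mathcal{M}_{n-1}$ with a total order on $\mathcal{M}_1\sqcup\dots\sqcup\mathcal{M}_{n-1}$ which restricts to an arbitrary total order on each $\mathcal{M}_j$ and satisfies $x>x'$ whenever $x\in\mathcal{M}_j$, $x'\in\mathcal{M}_{j'}$, $j>j'$, $$\mathcal{M}_n=\Big\{x_1\to\big(x_2\to(\cdots\to(x_r\to\bullet)\cdots)\big)\ \Big|\ r\ge 1,\ x_k\in\mathcal{M}_{j_k},\ \textstyle\sum_{k=1}^r j_k=n-1,\ x_1\ge x_2\ge\cdots\ge x_r\Big\}.$$ Then for every $n\ge 1$, replacing the grafting $\to$ by the Butcher product $\circ\!\!\rightarrow$ in each monomial of $\mathcal{M}_n$ yields every non-planar rooted tree with $n$ vertices exactly once.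
   Context: $\mathcal{T}$ is the vector space spanned by non-planar rooted trees; $\bullet$ is the one-vertex tree. The grafting $s\to t=\sum_{v\in V(t)}s\to_v t$ (graft the root of $s$ by a new edge onto vertex $v$ of $t$) makes $\mathcal{T}$ the free pre-Lie algebra on $\bullet$, graded by number of vertices. $B_+(t_1\cdots t_k)$ denotes the tree obtained by attaching the roots of $t_1,\dots,t_k$ to a new root; the Butcher product is $s\circ\!\!\rightarrow B_+(t_1\cdots t_k)=B_+(s\,t_1\cdots t_k)$. A monomial is a parenthesized word in $\bullet$ and one binary operation; its lower-energy term is its evaluation with the Butcher product. A monomial basis (set of monomials whose grafting-evaluations form a basis) of the degree-$n$ component is tree-grounded if its lower-energy terms are exactly the rooted trees with $n$ vertices, each once. *)

theory Defs
  imports Main "HOL-Library.Multiset"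
begin

text \<open>Non-planar rooted trees: a root together with a multiset of subtrees.\<close>
datatype rtree = Node "rtree multiset"

definition bullet :: rtree where "bullet = Node {#}"

primrec nverts :: "rtree \<Rightarrow> nat" where
  "nverts (Node M) = Suc (sum_mset (image_mset nverts M))"

fun butcher :: "rtree \<Rightarrow> rtree \<Rightarrow> rtree" where
  "butcher s (Node M) = Node (add_mset s M)"

text \<open>Monomials: parenthesized words in the generator and one binary operation;
  Op a b stands for a \<rightarrow> b.\<close>
datatype mono = Gen | Op mono mono

primrec lower_energy :: "mono \<Rightarrow> rtree" where
  "lower_energy Gen = bullet"
| "lower_energy (Op a b) = butcher (lower_energy a) (lower_energy b)"

definition right_comb :: "mono list \<Rightarrow> mono" where
  "right_comb xs = foldr Op xs Gen"

text \<open>Agrachev--Gamkrelidze families: M n for n \<ge> 1 together with a total order R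
  (pairs (a,b) meaning a \<le> b) on the union of all M j, j \<ge> 1, which is compatible with degree.\<close>
definition AG_family :: "(nat \<Rightarrow> mono set) \<Rightarrow> mono rel \<Rightarrow> bool" where
  "AG_family M R \<longleftrightarrow>
     linear_order_on (\<Union>j\<in>{1..}. M j) R
   \<and> (\<forall>j j' x x'. 1 \<le> j' \<and> j' < j \<and> x \<in> M j \<and> x' \<in> M j' \<longrightarrow> (x', x) \<in> R \<and> x \<noteq> x')
   \<and> M 1 = {Gen}
   \<and> (\<forall>n\<ge>2. M n =
        {right_comb xs | xs js. xs \<noteq> [] \<and> length js = length xs
           \<and> (\<forall>k<length xs. 1 \<le> js ! k \<and> xs ! k \<in> M (js ! k))
           \<and> sum_list js = n - 1
           \<and> sorted_wrt (\<lambda>a b. (b, a) \<in> R) xs})"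

end

theory Submission
  imports Defs
begin

lemma le_rc: "lower_energy (right_comb xs) = Node (mset (map lower_energy xs))"
  by (induction xs) (auto simp: right_comb_def bullet_def)

lemma sum_mset_map_list: "sum_mset (image_mset g (mset ys)) = sum_list (map g ys)"
  by (induction ys) auto

lemma nverts_node_list: "nverts (Node (mset (map f xs))) = Suc (sum_list (map (nverts \<circ> f) xs))"
  by (simp add: multiset.map_comp sum_mset_map_list)

lemma mem_le_sum: "s \<in># T \<Longrightarrow> nverts s \<le> sum_mset (image_mset nverts T)"
  by (metis multi_member_split image_mset_add_mset sum_mset.insert le_add1)

lemma nverts_pos: "nverts t \<ge> 1"
  by (cases t) auto

lemma sorted_unique:
  assumes "antisym R"
  shows "sorted_wrt (\<lambda>a b. (b,a)\<in>R) xs \<Longrightarrow> sorted_wrt (\<lambda>a b. (b,a)\<in>R) ys \<Longrightarrow> mset xs = mset ys \<Longrightarrow> xs = ys"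
proof (induction xs arbitrary: ys)
  case Nil then show ?case by simp
next
  case (Cons a xs)
  then obtain b ys' where ys: "ys = b # ys'" by (cases ys) auto
  have "a = b"
  proof (rule ccontr)
    assume ne: "a \<noteq> b"
    have "a \<in> set ys" using Cons.prems(3) by (metis list.set_intros(1) set_mset_mset)
    with ne ys Cons.prems(2) have 1: "(a,b) \<in> R" by auto
    have "b \<in> set (a#xs)" using Cons.prems(3) ys by (metis list.set_intros(1) set_mset_mset)
    with ne Cons.prems(1) have 2: "(b,a) \<in> R" by auto
    from 1 2 assms ne show False by (auto simp: antisym_def)
  qed
  then have "mset xs = mset ys'" using Cons.prems(3) ys by simp
  then have "xs = ys'" using Cons ys by auto
  then show ?case using ys \<open>a = b\<close> by simp
qed

lemma ins_exists:
  assumes refl: "\<forall>x\<in>D. (x,x)\<in>R" and tr: "trans R" and tot: "total_on D R" and xD: "x \<in> D"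
  shows "set ys \<subseteq> D \<Longrightarrow> sorted_wrt (\<lambda>a b. (b,a)\<in>R) ys \<Longrightarrow>
    \<exists>zs. mset zs = add_mset x (mset ys) \<and> sorted_wrt (\<lambda>a b. (b,a)\<in>R) zs"
proof (induction ys)
  case Nil then show ?case by (intro exI[of _ "[x]"]) auto
next
  case (Cons y ys)
  show ?case
  proof (cases "(y,x) \<in> R")
    case True
    have "sorted_wrt (\<lambda>a b. (b,a)\<in>R) (x # y # ys)"
      using Cons.prems True tr by (auto dest: transD)
    then show ?thesis by (intro exI[of _ "x # y # ys"]) auto
  next
    case False
    have yD: "y \<in> D" using Cons.prems by auto
    have xy: "(x,y) \<in> R" using False tot xD yD refl unfolding total_on_def by metis
    obtain zs where zs: "mset zs = add_mset x (mset ys)" "sorted_wrt (\<lambda>a b. (b,a)\<in>R) zs"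
      using Cons by auto
    have "set zs = insert x (set ys)" using zs(1) by (metis mset_eq_setD set_mset_add_mset_insert set_mset_mset)
    then have "sorted_wrt (\<lambda>a b. (b,a)\<in>R) (y # zs)" using zs(2) xy Cons.prems by auto
    then show ?thesis using zs(1) by (intro exI[of _ "y # zs"]) auto
  qed
qed

lemma sorted_exists:
  assumes refl: "\<forall>x\<in>D. (x,x)\<in>R" and tr: "trans R" and tot: "total_on D R"
  shows "set_mset X \<subseteq> D \<Longrightarrow> \<exists>xs. mset xs = X \<and> sorted_wrt (\<lambda>a b. (b,a)\<in>R) xs"
proof (induction X)
  case empty then show ?case by auto
next
  case (add x X)
  then obtain ys where ys: "mset ys = X" "sorted_wrt (\<lambda>a b. (b,a)\<in>R) ys" by auto
  have "set ys \<subseteq> D" using ys(1) add.prems by auto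
  then show ?case using ins_exists[OF refl tr tot, of x ys] add.prems ys by auto
qed

lemma mset_inj_map:
  assumes "inj_on f U" "set xs \<subseteq> U" "set ys \<subseteq> U" "mset (map f xs) = mset (map f ys)"
  shows "mset xs = mset ys"
proof -
  have "map (inv_into U f) (map f xs) = xs" using assms(1,2)
    by (induction xs) auto
  moreover have "map (inv_into U f) (map f ys) = ys" using assms(1,3)
    by (induction ys) auto
  ultimately show ?thesis using assms(4) by (metis mset_map)
qed

context
  fixes M :: "nat \<Rightarrow> mono set" and R :: "mono rel"
  assumes AG: "AG_family M R"
begin

lemma M1: "M 1 = {Gen}" using AG by (simp add: AG_family_def)

lemma Mn: "n \<ge> 2 \<Longrightarrow> M n =
        {right_comb xs | xs js. xs \<noteq> [] \<and> length js = length xs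
           \<and> (\<forall>k<length xs. 1 \<le> js ! k \<and> xs ! k \<in> M (js ! k))
           \<and> sum_list js = n - 1
           \<and> sorted_wrt (\<lambda>a b. (b, a) \<in> R) xs}"
  using AG by (simp add: AG_family_def)

lemma lin: "linear_order_on (\<Union>j\<in>{1..}. M j) R" using AG by (simp add: AG_family_def)

lemma degA: "1 \<le> n \<Longrightarrow> x \<in> M n \<Longrightarrow> nverts (lower_energy x) = n"
proof (induction n arbitrary: x rule: less_induct)
  case (less n)
  show ?case
  proof (cases "n = 1")
    case True then show ?thesis using less M1 by (simp add: bullet_def)
  next
    case False
    then have "n \<ge> 2" using less by auto
    with less.prems Mn obtain xs js where h: "x = right_comb xs" "length js = length xs"
      "\<forall>k<length xs. 1 \<le> js ! k \<and> xs ! k \<in> M (js ! k)" "sum_list js = n - 1" by blast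
    have "js = map (nverts \<circ> lower_energy) xs"
    proof (rule nth_equalityI)
      fix k assume k: "k < length js"
      have "js ! k \<le> sum_list js" using k by (simp add: elem_le_sum_list)
      then have "js ! k < n" using h(4) \<open>n \<ge> 2\<close> by auto
      then show "js ! k = map (nverts \<circ> lower_energy) xs ! k"
        using less.IH h(2,3) k by auto
    qed (use h in auto)
    then have "nverts (lower_energy x) = Suc (sum_list js)"
      by (simp only: h(1) le_rc nverts_node_list)
    then show ?thesis using h(4) \<open>n \<ge> 2\<close> by simp
  qed
qed

lemma injB: "1 \<le> n \<Longrightarrow> inj_on lower_energy (M n)"
proof (induction n rule: less_induct)
  case (less n)
  show ?case
  proof (cases "n = 1")
    case True then show ?thesis using M1 by simp
  next
    case False
    then have n2: "n \<ge> 2" using less by auto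
    define U where "U = (\<Union>j\<in>{1..<n}. M j)"
    have injU: "inj_on lower_energy U"
    proof (rule inj_onI)
      fix x y assume "x \<in> U" "y \<in> U" and e: "lower_energy x = lower_energy y"
      then obtain j j' where j: "1 \<le> j" "j < n" "x \<in> M j" "1 \<le> j'" "j' < n" "y \<in> M j'"
        unfolding U_def by auto
      have "j = j'" using degA[OF j(1,3)] degA[OF j(4,6)] e by simp
      then show "x = y" using less.IH[OF j(2) j(1)] j e by (auto dest: inj_onD)
    qed
    have sub: "set xs \<subseteq> U" if h: "length js = length xs"
      "\<forall>k<length xs. 1 \<le> js ! k \<and> xs ! k \<in> M (js ! k)" "sum_list js = n - 1" for xs js
    proof
      fix x assume "x \<in> set xs"
      then obtain k where k: "k < length xs" "x = xs ! k" by (metis in_set_conv_nth)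
      have "js ! k \<le> sum_list js" using k h(1) by (simp add: elem_le_sum_list)
      then show "x \<in> U" using h k n2 unfolding U_def by (auto intro!: bexI[of _ "js ! k"])
    qed
    have antis: "antisym R" using lin by (simp add: linear_order_on_def partial_order_on_def)
    show ?thesis
    proof (rule inj_onI)
      fix x y assume xM: "x \<in> M n" and yM: "y \<in> M n" and e: "lower_energy x = lower_energy y"
      from xM Mn[OF n2] obtain xs js where hx: "x = right_comb xs" "length js = length xs"
        "\<forall>k<length xs. 1 \<le> js ! k \<and> xs ! k \<in> M (js ! k)" "sum_list js = n - 1"
        "sorted_wrt (\<lambda>a b. (b, a) \<in> R) xs" by blast
      from yM Mn[OF n2] obtain ys js' where hy: "y = right_comb ys" "length js' = length ys"
        "\<forall>k<length ys. 1 \<le> js' ! k \<and> ys ! k \<in> M (js' ! k)" "sum_list js' = n - 1"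
        "sorted_wrt (\<lambda>a b. (b, a) \<in> R) ys" by blast
      have "mset (map lower_energy xs) = mset (map lower_energy ys)"
        using e hx(1) hy(1) by (simp add: le_rc)
      then have "mset xs = mset ys"
        using mset_inj_map[OF injU sub[OF hx(2-4)] sub[OF hy(2-4)]] by simp
      then have "xs = ys" using sorted_unique[OF antis hx(5) hy(5)] by simp
      then show "x = y" using hx(1) hy(1) by simp
    qed
  qed
qed

lemma surjC: "1 \<le> n \<Longrightarrow> nverts t = n \<Longrightarrow> t \<in> lower_energy ` M n"
proof (induction n arbitrary: t rule: less_induct)
  case (less n)
  obtain T where t: "t = Node T" by (cases t)
  show ?case
  proof (cases "n = 1")
    case True
    then have "sum_mset (image_mset nverts T) = 0" using less.prems t by simp
    then have "T = {#}" using nverts_pos mem_le_sum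
      by (metis le_zero_eq multiset_nonemptyE not_one_le_zero)
    then show ?thesis using t True M1 by (simp add: bullet_def)
  next
    case False
    then have n2: "n \<ge> 2" using less by auto
    have sumT: "sum_mset (image_mset nverts T) = n - 1" using less.prems t by simp
    have small: "nverts s < n" if "s \<in># T" for s
    proof -
      have "nverts s \<le> sum_mset (image_mset nverts T)"
        using that by (rule mem_le_sum)
      then show ?thesis using sumT n2 by auto
    qed
    have pre: "\<exists>x. x \<in> M (nverts s) \<and> lower_energy x = s" if "s \<in># T" for s
      using less.IH[OF small[OF that] nverts_pos refl] by auto
    define g where "g s = (SOME x. x \<in> M (nverts s) \<and> lower_energy x = s)" for s
    have g: "g s \<in> M (nverts s) \<and> lower_energy (g s) = s" if "s \<in># T" for s
      unfolding g_def using someI_ex[OF pre[OF that]] .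
    define X where "X = image_mset g T"
    have imX: "image_mset lower_energy X = T"
      unfolding X_def multiset.map_comp by (rule trans[OF image_mset_cong[of T _ id]]) (use g in auto)
    define D where "D = (\<Union>j\<in>{1..}. M j)"
    have XD: "set_mset X \<subseteq> D"
    proof
      fix x assume "x \<in># X"
      then obtain s where s: "s \<in># T" "x = g s" unfolding X_def by auto
      then show "x \<in> D" unfolding D_def using g[OF s(1)] nverts_pos[of s] by blast
    qed
    have refl: "\<forall>x\<in>D. (x,x)\<in>R" and tr: "trans R" and tot: "total_on D R"
      using lin unfolding D_def linear_order_on_def partial_order_on_def preorder_on_def refl_on_def
      by auto
    obtain xs where xs: "mset xs = X" "sorted_wrt (\<lambda>a b. (b,a)\<in>R) xs"
      using sorted_exists[OF refl tr tot XD] by auto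
    have xsM: "x \<in> M (nverts (lower_energy x))" if "x \<in> set xs" for x
    proof -
      have "x \<in># X" using that xs(1) by auto
      then obtain s where "s \<in># T" "x = g s" unfolding X_def by auto
      then show ?thesis using g by auto
    qed
    define js where "js = map (nverts \<circ> lower_energy) xs"
    have mT: "mset (map lower_energy xs) = T" using xs(1) imX by simp
    have c1: "sum_list js = n - 1"
      using sumT mT unfolding js_def
      by (metis map_map mset_map sum_mset_sum_list)
    have c2: "xs \<noteq> []" using mT n2 less.prems t by auto
    have c3: "\<forall>k<length xs. 1 \<le> js ! k \<and> xs ! k \<in> M (js ! k)"
      using xsM nverts_pos unfolding js_def by auto
    have c4: "length js = length xs" unfolding js_def by simp
    have "right_comb xs \<in> M n"
      unfolding Mn[OF n2]
      apply (rule CollectI)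
      apply (rule exI[of _ xs], rule exI[of _ js])
      using c1 c2 c3 c4 xs(2) by blast
    moreover have "lower_energy (right_comb xs) = t" using mT t by (simp add: le_rc)
    ultimately show ?thesis by (metis image_eqI)
  qed
qed

end

theorem lemma3p5:
  fixes M :: "nat \<Rightarrow> mono set" and R :: "mono rel" and n :: nat
  assumes "AG_family M R" and "1 \<le> n"
  shows "bij_betw lower_energy (M n) {t. nverts t = n}"
  unfolding bij_betw_def
  using injB[OF assms] degA[OF assms(1) assms(2)] surjC[OF assms(1) assms(2)] by auto

end
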